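(* Let $q\geq 1$ be a constant, let $(X,d)$ be a finite metric space and $k$ an integer with $2\le k\le |X|$ (with $k$ even when considering remote-bipartition). For each diversity function $\mathrm{div}^q\in\{\mathrm{cl}^q,\mathrm{st}^q,\mathrm{bp}^q\}$ and each fixed optimal $k$-set $\mathrm{OPT}_{\mathrm{div}^q}\subseteq X$, there is a point $z_0\in \mathrm{OPT}_{\mathrm{div}^q}$ such that \[ X\setminus B\big(z_0, c_{\mathrm{div}^q}(\Delta_{\mathrm{div}^q})^{1/q}\big)\subseteq \mathrm{OPT}_{\mathrm{div}^q},\] where $c_{\mathrm{cl}^q}=2$, $c_{\mathrm{st}^q}=4$ and $c_{\mathrm{bp}^q}=6$.
   Context: For $T\subseteq X$ with $|T|=k$: $\mathrm{cl}^q(T)=\sum_{\{u,v\}\subseteq T} d^q(u,v)$; $\mathrm{st}^q(T)=\min_{z\in T}\sum_{u\in T\setminus\{z\}} d^q(z,u)$; $\mathrm{bp}^q(T)=\min_{L\subseteq T,|L|=|T|/2}\sum_{\ell\in L,r\in T\setminus L} d^q(\ell,r)$, where $d^q=d(\cdot,\cdot)^q$. An optimal $k$-set $\mathrm{OPT}_{\mathrm{div}^q}$ is a $k$-subset of $X$ maximizing $\mathrm{div}^q$. The average optimal values are $\Delta_{\mathrm{cl}^q}=\mathrm{cl}^q(\mathrm{OPT}_{\mathrm{cl}^q})/\binom{k}{2}$, $\Delta_{\mathrm{st}^q}=\mathrm{st}^q(\mathrm{OPT}_{\mathrm{st}^q})/(k-1)$, $\Delta_{\mathrm{bp}^q}=\mathrm{bp}^q(\mathrm{OPT}_{\mathrm{bp}^q})/(k^2/4)$.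 $B(u,r)=\{v\in X: d(u,v)\le r\}$. *)

theory Defs
  imports Complex_Main
begin

definition metric_on :: "'a set \<Rightarrow> ('a \<Rightarrow> 'a \<Rightarrow> real) \<Rightarrow> bool" where
  "metric_on X d \<longleftrightarrow>
     (\<forall>x\<in>X. \<forall>y\<in>X. d x y \<ge> 0) \<and>
     (\<forall>x\<in>X. \<forall>y\<in>X. d x y = 0 \<longleftrightarrow> x = y) \<and>
     (\<forall>x\<in>X. \<forall>y\<in>X. d x y = d y x) \<and>
     (\<forall>x\<in>X. \<forall>y\<in>X. \<forall>z\<in>X. d x z \<le> d x y + d y z)"

definition dq :: "real \<Rightarrow> ('a \<Rightarrow> 'a \<Rightarrow> real) \<Rightarrow> 'a \<Rightarrow> 'a \<Rightarrow> real" where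
  "dq q d u v = d u v powr q"

definition cl :: "real \<Rightarrow> ('a \<Rightarrow> 'a \<Rightarrow> real) \<Rightarrow> 'a set \<Rightarrow> real" where
  "cl q d T = (\<Sum>P\<in>{P. P \<subseteq> T \<and> card P = 2}. (THE r. \<exists>u v. P = {u, v} \<and> r = dq q d u v))"

definition st :: "real \<Rightarrow> ('a \<Rightarrow> 'a \<Rightarrow> real) \<Rightarrow> 'a set \<Rightarrow> real" where
  "st q d T = (MIN z\<in>T. \<Sum>u\<in>T - {z}. dq q d z u)"

definition bp :: "real \<Rightarrow> ('a \<Rightarrow> 'a \<Rightarrow> real) \<Rightarrow> 'a set \<Rightarrow> real" where
  "bp q d T = Min ((\<lambda>L. \<Sum>l\<in>L. \<Sum>r\<in>T - L. dq q d l r) ` {L. L \<subseteq> T \<and> 2 * card L = card T})"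

definition is_opt :: "('a set \<Rightarrow> real) \<Rightarrow> 'a set \<Rightarrow> nat \<Rightarrow> 'a set \<Rightarrow> bool" where
  "is_opt dv X k T \<longleftrightarrow> T \<subseteq> X \<and> card T = k \<and>
     (\<forall>S. S \<subseteq> X \<and> card S = k \<longrightarrow> dv S \<le> dv T)"

definition Ball_X :: "'a set \<Rightarrow> ('a \<Rightarrow> 'a \<Rightarrow> real) \<Rightarrow> 'a \<Rightarrow> real \<Rightarrow> 'a set" where
  "Ball_X X d u r = {v\<in>X. d u v \<le> r}"

(* average optimal values, expressed via a fixed optimal set T *)
definition Delta_cl :: "real \<Rightarrow> ('a \<Rightarrow> 'a \<Rightarrow> real) \<Rightarrow> nat \<Rightarrow> 'a set \<Rightarrow> real" where
  "Delta_cl q d k T = cl q d T / real (k choose 2)"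
definition Delta_st :: "real \<Rightarrow> ('a \<Rightarrow> 'a \<Rightarrow> real) \<Rightarrow> nat \<Rightarrow> 'a set \<Rightarrow> real" where
  "Delta_st q d k T = st q d T / (real k - 1)"
definition Delta_bp :: "real \<Rightarrow> ('a \<Rightarrow> 'a \<Rightarrow> real) \<Rightarrow> nat \<Rightarrow> 'a set \<Rightarrow> real" where
  "Delta_bp q d k T = bp q d T / (real k ^ 2 / 4)"

end

theory Submission
  imports Defs "HOL-Analysis.Convex"
begin


lemma K_real:
  fixes a b q :: real
  assumes "0 \<le> a" "0 \<le> b" "1 \<le> q"
  shows "(a + b) powr q \<le> 2 powr (q - 1) * (a powr q + b powr q)"
proof -
  have H1: "1 \<le> 2 powr (q - 1)" using assms by (intro ge_one_powr_ge_zero) auto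
  show ?thesis
  proof (cases "a = 0 \<or> b = 0")
    case True
    have ia: "a powr q \<le> 2 powr (q - 1) * a powr q" and ib: "b powr q \<le> 2 powr (q - 1) * b powr q"
      using mult_right_mono[OF H1 powr_ge_zero] by auto
    consider "a = 0" | "b = 0" using True by blast
    then show ?thesis
    proof cases
      case 1
      then have "(a + b) powr q = b powr q" "a powr q = 0" by simp_all
      then show ?thesis using ib by simp
    next
      case 2
      then have "(a + b) powr q = a powr q" "b powr q = 0" by simp_all
      then show ?thesis using ia by simp
    qed
  next
    case False
    with assms have ab: "a \<in> {0<..}" "b \<in> {0<..}" by auto
    have "((1 - 1/2) *\<^sub>R a + (1/2) *\<^sub>R b) powr q \<le> (1 - 1/2) * a powr q + (1/2) * b powr q"
      using convex_onD[OF powr_convex[OF assms(3)], of "1/2" a b] ab by simp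
    hence "((a + b) / 2) powr q \<le> (a powr q + b powr q) / 2" by (simp add: field_simps)
    hence "(a + b) powr q / 2 powr q \<le> (a powr q + b powr q) / 2" by (simp add: powr_divide)
    moreover have "2 powr q = 2 * 2 powr (q - 1)"
      using powr_add[of "2::real" 1 "q - 1"] by simp
    ultimately show ?thesis by (simp add: field_simps)
  qed
qed

lemma dq_nonneg: "0 \<le> dq q d u v" by (simp add: dq_def)

lemma mfacts:
  assumes "metric_on X d" "u \<in> X" "v \<in> X"
  shows "d u v \<ge> 0" "d u u = 0" "d u v = d v u" "dq q d u v = dq q d v u" "dq q d u u = 0"
  using assms by (auto simp: metric_on_def dq_def)

lemma mtri: assumes "metric_on X d" "u \<in> X" "v \<in> X" "w \<in> X"
  shows "d u w \<le> d u v + d v w"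
  using assms by (auto simp: metric_on_def)

lemma Km:
  assumes "metric_on X d" "a \<in> X" "b \<in> X" "c \<in> X" "1 \<le> q"
  shows "d a c powr q \<le> 2 powr (q - 1) * (dq q d a b + dq q d b c)"
proof -
  have "d a c powr q \<le> (d a b + d b c) powr q"
    using assms mfacts[OF assms(1)] mtri[OF assms(1-4)] by (intro powr_mono2) auto
  also have "\<dots> \<le> 2 powr (q - 1) * (dq q d a b + dq q d b c)"
    unfolding dq_def using K_real assms mfacts[OF assms(1)] by auto
  finally show ?thesis .
qed

lemma thresh:
  fixes c D Dl q :: real
  assumes "0 < c" "0 \<le> Dl" "1 \<le> q" "D > c * Dl powr (1/q)"
  shows "D powr q > c powr q * Dl"
proof -
  have "(c * Dl powr (1/q)) powr q < D powr q"
    using assms by (intro powr_less_mono2) auto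
  moreover have "(c * Dl powr (1/q)) powr q = c powr q * Dl"
    using assms by (simp add: powr_mult powr_powr powr_one)
  ultimately show ?thesis by simp
qed

lemma pow_facts:
  fixes q :: real assumes "1 \<le> q"
  shows "1 \<le> 2 powr (q - 1)" "2 powr q = 2 * 2 powr (q - 1)"
    "4 powr q = 4 * (2 powr (q - 1))^2"
    "6 powr q = 2 * 2 powr (q - 1) * 3 powr q" "3 powr q \<ge> 1 + 2 * 2 powr (q - 1)"
proof -
  show "1 \<le> 2 powr (q - 1)" using assms by (intro ge_one_powr_ge_zero) auto
  show e2: "2 powr q = 2 * 2 powr (q - 1)"
    using powr_add[of "2::real" 1 "q - 1"] by simp
  show "4 powr q = 4 * (2 powr (q - 1))^2"
    using powr_mult[of 2 2 q] e2 by (simp add: power2_eq_square)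
  show "6 powr q = 2 * 2 powr (q - 1) * 3 powr q"
    using powr_mult[of 2 3 q] e2 by simp
  have "3 powr (q - 1) \<ge> 2 powr (q - 1)" using assms by (intro powr_mono2) auto
  moreover have "3 powr (q - 1) \<ge> 1" using assms by (intro ge_one_powr_ge_zero) auto
  moreover have "3 powr q = 3 * 3 powr (q - 1)"
    using powr_add[of "3::real" 1 "q - 1"] by simp
  ultimately show "3 powr q \<ge> 1 + 2 * 2 powr (q - 1)" by linarith
qed

lemma exists_le_avg:
  fixes f :: "'b \<Rightarrow> real"
  assumes "finite T" "T \<noteq> {}"
  shows "\<exists>z\<in>T. real (card T) * f z \<le> sum f T"
proof -
  have "Min (f ` T) \<in> f ` T" using assms by (intro Min_in) auto
  then obtain z where z: "z \<in> T" "f z = Min (f ` T)" by (metis imageE)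
  have "\<forall>i\<in>T. f z \<le> f i" using z assms by auto
  hence "of_nat (card T) * f z \<le> sum f T" by (intro sum_bounded_below) auto
  thus ?thesis using z(1) by blast
qed



lemma cl_empty: "cl q d {} = 0"
  unfolding cl_def by simp

lemma pairs_insert:
  assumes "x \<notin> S"
  shows "{P. P \<subseteq> insert x S \<and> card P = 2} = {P. P \<subseteq> S \<and> card P = 2} \<union> (\<lambda>u. {x, u}) ` S"
proof (intro equalityI subsetI)
  fix P assume "P \<in> {P. P \<subseteq> insert x S \<and> card P = 2}"
  then obtain a b where P: "P = {a, b}" "a \<noteq> b" "P \<subseteq> insert x S" by (auto simp: card_2_iff)
  show "P \<in> {P. P \<subseteq> S \<and> card P = 2} \<union> (\<lambda>u. {x, u}) ` S"
  proof (cases "x \<in> P")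
    case False then show ?thesis using P by (auto simp: card_2_iff)
  next
    case True
    then have "a = x \<or> b = x" using P by auto
    then show ?thesis using P assms by (auto simp: insert_commute)
  qed
next
  fix P assume "P \<in> {P. P \<subseteq> S \<and> card P = 2} \<union> (\<lambda>u. {x, u}) ` S"
  then show "P \<in> {P. P \<subseteq> insert x S \<and> card P = 2}" using assms by (auto simp: card_2_iff)
qed

lemma the_pair:
  assumes "metric_on X d" "x \<in> X" "u \<in> X"
  shows "(THE r. \<exists>a b. {x, u} = {a, b} \<and> r = dq q d a b) = dq q d x u"
proof (rule the_equality)
  show "\<exists>a b. {x, u} = {a, b} \<and> dq q d x u = dq q d a b" by blast
next
  fix r assume "\<exists>a b. {x, u} = {a, b} \<and> r = dq q d a b"
  then obtain a b where "{x, u} = {a, b}" "r = dq q d a b" by blast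
  then show "r = dq q d x u" using mfacts(4)[OF assms(1,2,3)]
    by (auto simp: doubleton_eq_iff)
qed

lemma cl_insert:
  assumes "metric_on X d" "finite S" "x \<notin> S" "insert x S \<subseteq> X"
  shows "cl q d (insert x S) = cl q d S + (\<Sum>u\<in>S. dq q d x u)"
proof -
  let ?g = "\<lambda>P. (THE r. \<exists>u v. P = {u, v} \<and> r = dq q d u v)"
  have fin: "finite {P. P \<subseteq> S \<and> card P = 2}" using assms(2) by simp
  have disj: "{P. P \<subseteq> S \<and> card P = 2} \<inter> (\<lambda>u. {x, u}) ` S = {}" using assms(3) by auto
  have inj: "inj_on (\<lambda>u. {x, u}) S" using assms(3) by (auto simp: inj_on_def doubleton_eq_iff)
  have "cl q d (insert x S) = sum ?g ({P. P \<subseteq> S \<and> card P = 2} \<union> (\<lambda>u. {x, u}) ` S)"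
    unfolding cl_def pairs_insert[OF assms(3)] ..
  also have "\<dots> = cl q d S + sum ?g ((\<lambda>u. {x, u}) ` S)"
    unfolding cl_def using fin assms(2) disj by (intro sum.union_disjoint) auto
  also have "sum ?g ((\<lambda>u. {x, u}) ` S) = (\<Sum>u\<in>S. ?g {x, u})"
    using inj by (simp add: sum.reindex)
  also have "\<dots> = (\<Sum>u\<in>S. dq q d x u)"
    using assms by (intro sum.cong refl the_pair[OF assms(1)]) auto
  finally show ?thesis .
qed

lemma sum_s:
  assumes "metric_on X d" "finite T" "T \<subseteq> X"
  shows "(\<Sum>z\<in>T. \<Sum>u\<in>T - {z}. dq q d z u) = 2 * cl q d T"
  using assms(2,3)
proof (induction T rule: finite_induct)
  case empty then show ?case by (simp add: cl_empty)
next
  case (insert x F)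
  have "(\<Sum>z\<in>insert x F. \<Sum>u\<in>insert x F - {z}. dq q d z u)
      = (\<Sum>u\<in>F. dq q d x u) + (\<Sum>z\<in>F. \<Sum>u\<in>insert x F - {z}. dq q d z u)"
    using insert by (simp add: insert_Diff_if)
  also have "(\<Sum>z\<in>F. \<Sum>u\<in>insert x F - {z}. dq q d z u)
      = (\<Sum>z\<in>F. dq q d z x + (\<Sum>u\<in>F - {z}. dq q d z u))"
  proof (intro sum.cong refl)
    fix z assume z: "z \<in> F"
    then have "insert x F - {z} = insert x (F - {z})" using insert by auto
    then show "(\<Sum>u\<in>insert x F - {z}. dq q d z u) = dq q d z x + (\<Sum>u\<in>F - {z}. dq q d z u)"
      using insert by simp
  qed
  also have "\<dots> = (\<Sum>z\<in>F. dq q d x z) + 2 * cl q d F"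
    using insert mfacts(4)[OF assms(1)] by (simp add: sum.distrib subset_iff)
  finally show ?case using cl_insert[OF assms(1) insert(1,2,4)] by simp
qed



lemma sum_nonneg_dq: "0 \<le> (\<Sum>u\<in>S. dq q d z u)" by (intro sum_nonneg) (simp add: dq_nonneg)

lemma clique_part:
  assumes q: "q \<ge> 1" and fX: "finite X" and m: "metric_on X d" and k: "2 \<le> k"
    and opt: "is_opt (cl q d) X k T"
  shows "\<exists>z0\<in>T. X - Ball_X X d z0 (2 * Delta_cl q d k T powr (1/q)) \<subseteq> T"
proof -
  have TX: "T \<subseteq> X" and cT: "card T = k" using opt by (auto simp: is_opt_def)
  have fT: "finite T" using TX fX finite_subset by auto
  have ne: "T \<noteq> {}" using cT k by auto
  define s where "s z = (\<Sum>u\<in>T - {z}. dq q d z u)" for z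
  have sumS: "sum s T = 2 * cl q d T" unfolding s_def using sum_s[OF m fT TX] .
  obtain z0 where z0: "z0 \<in> T" "real k * s z0 \<le> sum s T"
    using exists_le_avg[OF fT ne, of s] cT by auto
  define Dl where "Dl = Delta_cl q d k T"
  have ch: "real (k choose 2) = real k * (real k - 1) / 2"
  proof -
    have "even (k * (k - 1))" by auto
    then have "real (k * (k - 1) div 2) = real (k * (k - 1)) / 2"
      by (simp add: real_of_nat_div)
    then show ?thesis using k by (simp add: choose_two of_nat_diff)
  qed
  have kpos: "real k * (real k - 1) > 0" using k by simp
  have s0: "s z0 \<ge> 0" unfolding s_def by (rule sum_nonneg_dq)
  have Dl_eq: "Dl = 2 * cl q d T / (real k * (real k - 1))"
    unfolding Dl_def Delta_cl_def ch by simp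
  have "sum s T \<ge> 0" unfolding s_def by (intro sum_nonneg sum_nonneg_dq)
  hence Dl0: "Dl \<ge> 0" using Dl_eq sumS kpos by simp
  have sz0: "s z0 \<le> (real k - 1) * Dl"
  proof -
    have "real k * ((real k - 1) * Dl) = 2 * cl q d T"
    proof -
      have "Dl * (real k * (real k - 1)) = 2 * cl q d T"
        using nonzero_eq_divide_eq[of "real k * (real k - 1)" Dl "2 * cl q d T"] Dl_eq kpos by linarith
      moreover have "real k * ((real k - 1) * Dl) = Dl * (real k * (real k - 1))" by (simp only: ac_simps)
      ultimately show ?thesis by simp
    qed
    hence "real k * s z0 \<le> real k * ((real k - 1) * Dl)"
      using z0 sumS by simp
    thus ?thesis using k by simp
  qed
  show ?thesis unfolding Dl_def[symmetric]
  proof (intro bexI[OF _ z0(1)] subsetI)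
    fix x assume x: "x \<in> X - Ball_X X d z0 (2 * Dl powr (1/q))"
    show "x \<in> T"
    proof (rule ccontr)
      assume xT: "x \<notin> T"
      have xX: "x \<in> X" and far: "d z0 x > 2 * Dl powr (1/q)" using x by (auto simp: Ball_X_def)
      have "d z0 x powr q > 2 powr q * Dl" using thresh[OF _ Dl0 q far] by simp
      define H where "H = 2 powr (q - 1)"
      have H1: "H \<ge> 1" and H2: "2 powr q = 2 * H" using pow_facts[OF q] by (auto simp: H_def)
      define Dq where "Dq = d z0 x powr q"
      have farq: "Dq > 2 * H * Dl" using \<open>d z0 x powr q > _\<close> H2 by (simp add: Dq_def)
      define S where "S = T - {z0}"
      have fS: "finite S" and cS: "card S = k - 1" using fT cT z0 by (auto simp: S_def)
      have z0X: "z0 \<in> X" using z0 TX by auto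
      have "cl q d (insert x S) \<le> cl q d T"
        using opt unfolding is_opt_def
        apply (elim conjE allE[of _ "insert x S"])
        using xX TX fS cS xT k by (auto simp: S_def card_insert_if)
      moreover have "cl q d (insert x S) = cl q d S + (\<Sum>u\<in>S. dq q d x u)"
        using cl_insert[OF m fS] xT xX TX by (auto simp: S_def)
      moreover have "cl q d T = cl q d S + s z0"
        using cl_insert[OF m fS, of z0] z0 TX by (auto simp: S_def s_def insert_absorb)
      ultimately have A: "(\<Sum>u\<in>S. dq q d x u) \<le> s z0" by simp
      have "(\<Sum>u\<in>S. Dq) \<le> (\<Sum>u\<in>S. H * (dq q d z0 u + dq q d x u))"
      proof (intro sum_mono)
        fix u assume "u \<in> S"
        hence uX: "u \<in> X" using TX by (auto simp: S_def)
        show "Dq \<le> H * (dq q d z0 u + dq q d x u)"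
          using Km[OF m z0X uX xX q] mfacts(4)[OF m uX xX] by (simp add: Dq_def H_def)
      qed
      also have "\<dots> = H * (s z0 + (\<Sum>u\<in>S. dq q d x u))"
        by (simp add: s_def S_def sum.distrib distrib_left sum_distrib_left)
      also have "\<dots> \<le> H * (2 * ((real k - 1) * Dl))"
        using A sz0 H1 by (intro mult_left_mono) auto
      finally have "(real k - 1) * Dq \<le> (real k - 1) * (2 * H * Dl)"
        using cS k by (simp add: of_nat_diff algebra_simps)
      moreover have "(real k - 1) * Dq > (real k - 1) * (2 * H * Dl)"
        using farq k by (intro mult_strict_left_mono) auto
      ultimately show False by simp
    qed
  qed
qed



lemma star_part:
  assumes q: "q \<ge> 1" and fX: "finite X" and m: "metric_on X d" and k: "2 \<le> k"
    and opt: "is_opt (st q d) X k T"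
  shows "\<exists>z0\<in>T. X - Ball_X X d z0 (4 * Delta_st q d k T powr (1/q)) \<subseteq> T"
proof -
  have TX: "T \<subseteq> X" and cT: "card T = k" using opt by (auto simp: is_opt_def)
  have fT: "finite T" using TX fX finite_subset by auto
  have ne: "T \<noteq> {}" using cT k by auto
  define s where "s z = (\<Sum>u\<in>T - {z}. dq q d z u)" for z
  have stT: "st q d T = Min (s ` T)" unfolding st_def s_def ..
  have "Min (s ` T) \<in> s ` T" using fT ne by (intro Min_in) auto
  then obtain z0 where z0: "z0 \<in> T" "s z0 = Min (s ` T)" by (metis imageE)
  have smin: "s z0 \<le> s z" if "z \<in> T" for z using z0 that fT by auto
  define Dl where "Dl = Delta_st q d k T"
  have k1: "real k - 1 > 0" using k by simp
  have sz0: "s z0 = (real k - 1) * Dl"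
    unfolding Dl_def Delta_st_def stT z0(2)[symmetric] using k1 by simp
  have s0: "s z0 \<ge> 0" unfolding s_def by (rule sum_nonneg_dq)
  have Dl0: "Dl \<ge> 0" using s0 sz0 k1 by (simp add: zero_le_mult_iff)
  have z0X: "z0 \<in> X" using z0 TX by auto
  show ?thesis unfolding Dl_def[symmetric]
  proof (intro bexI[OF _ z0(1)] subsetI)
    fix x assume x: "x \<in> X - Ball_X X d z0 (4 * Dl powr (1/q))"
    show "x \<in> T"
    proof (rule ccontr)
      assume xT: "x \<notin> T"
      have xX: "x \<in> X" and far: "d z0 x > 4 * Dl powr (1/q)" using x by (auto simp: Ball_X_def)
      have "d z0 x powr q > 4 powr q * Dl" using thresh[OF _ Dl0 q far] by simp
      define H where "H = 2 powr (q - 1)"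
      have H1: "H \<ge> 1" and H2: "2 powr q = 2 * H" and H4: "4 powr q = 4 * H^2"
        using pow_facts[OF q] by (auto simp: H_def)
      define Dq where "Dq = d z0 x powr q"
      have farq: "Dq > 4 * H^2 * Dl" using \<open>d z0 x powr q > _\<close> H4 by (simp add: Dq_def)
      have HDl: "H * Dl \<ge> 0" using H1 Dl0 by simp
      have Y: "4 * H^2 * Dl = 2 * H * (2 * H * Dl)" by (simp add: power2_eq_square)
      have X: "2 * H * (2 * H * Dl) \<ge> 1 * (2 * H * Dl)" using H1 Dl0 by (intro mult_right_mono) (auto intro!: mult_nonneg_nonneg)
      have farq2: "Dq > 2 * H * Dl" using farq X Y by linarith
      define S where "S = T - {z0}"
      define T' where "T' = insert x S"
      have fS: "finite S" and cS: "card S = k - 1" using fT cT z0 by (auto simp: S_def)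
      have fT': "finite T'" and cT': "card T' = k" and T'X: "T' \<subseteq> X"
        using fS cS xT k xX TX by (auto simp: T'_def S_def card_insert_if)
      have le: "st q d T' \<le> st q d T" using opt fT' cT' T'X unfolding is_opt_def by blast
      define s' where "s' z = (\<Sum>u\<in>T' - {z}. dq q d z u)" for z
      have stT': "st q d T' = Min (s' ` T')" unfolding st_def s'_def ..
      have gt: "s z0 < s' z" if zT': "z \<in> T'" for z
      proof (cases "z = x")
        case True
        have e: "T' - {x} = S" using True xT by (auto simp: T'_def S_def)
        have "(\<Sum>u\<in>S. Dq) \<le> (\<Sum>u\<in>S. H * (dq q d z0 u + dq q d x u))"
        proof (intro sum_mono)
          fix u assume "u \<in> S"
          hence uX: "u \<in> X" using TX by (auto simp: S_def)
          show "Dq \<le> H * (dq q d z0 u + dq q d x u)"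
            using Km[OF m z0X uX xX q] mfacts(4)[OF m uX xX] by (simp add: Dq_def H_def)
        qed
        also have "\<dots> = H * (s z0 + s' z)"
          by (simp add: s_def s'_def e True S_def sum.distrib distrib_left sum_distrib_left)
        finally have A: "(real k - 1) * Dq \<le> H * (s z0 + s' z)"
          using cS k by (simp add: of_nat_diff)
        show ?thesis
        proof (rule ccontr)
          assume "\<not> s z0 < s' z"
          hence "s z0 + s' z \<le> 2 * ((real k - 1) * Dl)" using sz0 by linarith
          hence "H * (s z0 + s' z) \<le> H * (2 * ((real k - 1) * Dl))"
            using H1 by (intro mult_left_mono) auto
          with A have "(real k - 1) * Dq \<le> (real k - 1) * (2 * H * Dl)" by (simp add: ac_simps)
          moreover have "(real k - 1) * Dq > (real k - 1) * (2 * H * Dl)"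
            using farq2 k1 by (intro mult_strict_left_mono) auto
          ultimately show False by simp
        qed
      next
        case False
        hence zS: "z \<in> S" using zT' by (auto simp: T'_def)
        hence zT: "z \<in> T" and zX: "z \<in> X" and zz0: "z \<noteq> z0" using TX by (auto simp: S_def)
        define R where "R = T - {z0} - {z}"
        have fR: "finite R" using fT by (simp add: R_def)
        have e1: "T' - {z} = insert x R" using False xT by (auto simp: T'_def S_def R_def)
        have e2: "T - {z} = insert z0 R" using z0 zz0 by (auto simp: R_def)
        have e3: "T - {z0} = insert z R" using zT zz0 by (auto simp: R_def)
        have xR: "x \<notin> R" and z0R: "z0 \<notin> R" and zR: "z \<notin> R" using xT by (auto simp: R_def)
        have s'z: "s' z = dq q d z x + (\<Sum>u\<in>R. dq q d z u)"
          unfolding s'_def e1 using fR xR by simp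
        have sz: "s z = dq q d z z0 + (\<Sum>u\<in>R. dq q d z u)"
          unfolding s_def e2 using fR z0R by simp
        have sz0R: "s z0 = dq q d z0 z + (\<Sum>u\<in>R. dq q d z0 u)"
          unfolding s_def e3 using fR zR by simp
        have cR: "card R = k - 2" using cT z0 zT zz0 fT by (simp add: R_def card_Diff_subset)
        show ?thesis
        proof (cases "d z z0 < d z0 x / 2")
          case True
          have "d z0 x \<le> d z0 z + d z x" using mtri[OF m z0X zX xX] .
          hence "d z z0 < d z x" using True mfacts(3)[OF m zX z0X] by simp
          hence "dq q d z z0 < dq q d z x" unfolding dq_def
            using q mfacts(1)[OF m zX z0X] by (intro powr_less_mono2) auto
          hence "s z < s' z" using s'z sz by simp
          thus ?thesis using smin[OF zT] by simp
        next
          case False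
          define E where "E = d z z0 powr q"
          have "(d z0 x / 2) powr q \<le> E" unfolding E_def using False q mfacts(1)[OF m z0X xX]
            by (intro powr_mono2) auto
          moreover have "(d z0 x / 2) powr q = Dq / (2 * H)" by (simp add: powr_divide Dq_def H2)
          ultimately have a1: "Dq / (2 * H) \<le> E" by simp
          have pos2H: "0 < 2 * H" using H1 by simp
          have a2: "Dq \<le> E * (2 * H)" using pos_divide_le_eq[OF pos2H] a1 by blast
          have "(2 * H * Dl) * (2 * H) = 4 * H^2 * Dl" by (simp add: power2_eq_square)
          hence "(2 * H * Dl) * (2 * H) < E * (2 * H)" using farq a2 by linarith
          hence E2: "E > 2 * H * Dl" using mult_less_cancel_right_pos[OF pos2H] by blast
          have EE: "dq q d z0 z = E" using mfacts(4)[OF m z0X zX] by (simp add: E_def dq_def)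
          have "(\<Sum>u\<in>R. E) \<le> (\<Sum>u\<in>R. H * (dq q d z u + dq q d z0 u))"
          proof (intro sum_mono)
            fix u assume "u \<in> R"
            hence uX: "u \<in> X" using TX by (auto simp: R_def)
            show "E \<le> H * (dq q d z u + dq q d z0 u)"
              using Km[OF m zX uX z0X q] mfacts(4)[OF m uX z0X] by (simp add: E_def H_def)
          qed
          also have "\<dots> = H * ((\<Sum>u\<in>R. dq q d z u) + (\<Sum>u\<in>R. dq q d z0 u))"
            by (simp add: sum.distrib distrib_left sum_distrib_left)
          finally have B: "(real k - 2) * E \<le> H * ((\<Sum>u\<in>R. dq q d z u) + (s z0 - E))"
            using cR k sz0R EE by (simp add: of_nat_diff)
          show ?thesis
          proof (rule ccontr)
            assume "\<not> s z0 < s' z"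
            hence "(\<Sum>u\<in>R. dq q d z u) \<le> s z0" using s'z dq_nonneg[of q d z x] by simp
            hence "H * ((\<Sum>u\<in>R. dq q d z u) + (s z0 - E)) \<le> H * (2 * s z0 - E)"
              using H1 by (intro mult_left_mono) auto
            moreover have "H * (2 * s z0 - E) = 2 * H * ((real k - 1) * Dl) - H * E"
              by (simp add: sz0 algebra_simps)
            ultimately have C: "(real k - 2) * E + H * E \<le> 2 * H * ((real k - 1) * Dl)"
              using B by linarith
            have "(real k - 2) * E \<ge> (real k - 2) * (2 * H * Dl)"
              using E2 k by (intro mult_left_mono) auto
            moreover have "H * E > H * (2 * H * Dl)" using E2 H1 by (intro mult_strict_left_mono) auto
            moreover have "H * (2 * H * Dl) \<ge> 1 * (2 * H * Dl)"
              using H1 Dl0 by (intro mult_right_mono) (auto intro!: mult_nonneg_nonneg)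
            moreover have "(real k - 2) * (2 * H * Dl) + 1 * (2 * H * Dl) = 2 * H * ((real k - 1) * Dl)"
              by (simp add: algebra_simps)
            ultimately have "(real k - 2) * E + H * E > 2 * H * ((real k - 1) * Dl)"
              by linarith
            with C show False by simp
          qed
        qed
      qed
      have "s z0 < st q d T'" unfolding stT' using gt fT' cT' k by (subst Min_gr_iff) auto
      moreover have "st q d T = s z0" using stT z0 by simp
      ultimately show False using le by simp
    qed
  qed
qed



lemma bp_part:
  assumes q: "q \<ge> 1" and fX: "finite X" and m: "metric_on X d" and k: "2 \<le> k"
    and ev: "even k" and opt: "is_opt (bp q d) X k T"
  shows "\<exists>z0\<in>T. X - Ball_X X d z0 (6 * Delta_bp q d k T powr (1/q)) \<subseteq> T"
proof -
  have TX: "T \<subseteq> X" and cT: "card T = k" using opt by (auto simp: is_opt_def)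
  have fT: "finite T" using TX fX finite_subset by auto
  define c where "c (A::'a set) L = (\<Sum>l\<in>L. \<Sum>r\<in>A - L. dq q d l r)" for A L
  define BB where "BB (A::'a set) = {L. L \<subseteq> A \<and> 2 * card L = card A}" for A
  have bp_eq: "bp q d A = Min (c A ` BB A)" for A unfolding bp_def c_def BB_def ..
  have finBB: "finite (BB A)" if "finite A" for A
    using that by (rule finite_subset[rotated, OF finite_Pow_iff[THEN iffD2]]) (auto simp: BB_def)
  define mm where "mm = k div 2"
  have kmm: "k = 2 * mm" using ev by (simp add: mm_def)
  have mm1: "mm \<ge> 1" using k kmm by simp
  define mr where "mr = real mm"
  have mr1: "mr \<ge> 1" using mm1 by (simp add: mr_def)
  have neBB: "BB A \<noteq> {}" if fa: "finite A" "card A = k" for A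
  proof -
    have "mm \<le> card A" using fa kmm by simp
    then obtain L where "L \<subseteq> A" "card L = mm" by (rule obtain_subset_with_card_n)
    then show ?thesis using fa kmm by (auto simp: BB_def)
  qed
  have "Min (c T ` BB T) \<in> c T ` BB T" using finBB[OF fT] neBB[OF fT cT] by (intro Min_in) auto
  then obtain Ls where Ls: "Ls \<in> BB T" "c T Ls = bp q d T" unfolding bp_eq by (metis imageE)
  have LsT: "Ls \<subseteq> T" and cLs: "card Ls = mm" using Ls(1) cT kmm by (auto simp: BB_def)
  have fLs: "finite Ls" using LsT fT finite_subset by auto
  define Rs where "Rs = T - Ls"
  have fRs: "finite Rs" using fT by (simp add: Rs_def)
  have cRs: "card Rs = mm" using cT cLs LsT fT fLs kmm by (simp add: Rs_def card_Diff_subset)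
  define Dl where "Dl = Delta_bp q d k T"
  define Af where "Af l = (\<Sum>r\<in>Rs. dq q d l r)" for l
  have cost: "sum Af Ls = mr^2 * Dl"
  proof -
    have "real k ^ 2 / 4 = mr^2" using kmm by (simp add: mr_def power2_eq_square)
    moreover have "mr^2 > 0" using mr1 by simp
    ultimately have "bp q d T = mr^2 * Dl" unfolding Dl_def Delta_bp_def by simp
    thus ?thesis using Ls(2) by (simp add: c_def Af_def Rs_def)
  qed
  have A0: "Af l \<ge> 0" for l unfolding Af_def by (rule sum_nonneg_dq)
  have Dl0: "Dl \<ge> 0"
  proof -
    have "sum Af Ls \<ge> 0" using A0 by (intro sum_nonneg) auto
    thus ?thesis using cost mr1 by (simp add: zero_le_mult_iff)
  qed
  have neLs: "Ls \<noteq> {}" using cLs mm1 by auto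
  obtain l0 where l0: "l0 \<in> Ls" "real (card Ls) * Af l0 \<le> sum Af Ls"
    using exists_le_avg[OF fLs neLs, of Af] by auto
  have Al0: "Af l0 \<le> mr * Dl"
  proof -
    have "mr * Af l0 \<le> mr * (mr * Dl)" using l0(2) cost cLs by (simp add: mr_def power2_eq_square mult.assoc)
    thus ?thesis using mr1 by simp
  qed
  have l0T: "l0 \<in> T" and l0X: "l0 \<in> X" using l0 LsT TX by auto
  define H where "H = 2 powr (q - 1)"
  have H1: "H \<ge> 1" and H2: "2 powr q = 2 * H" and H6: "6 powr q = 2 * H * 3 powr q"
    and H3: "3 powr q \<ge> 1 + 2 * H"
    using pow_facts[OF q] by (auto simp: H_def)
  have per: "mr * dq q d l0 l \<le> H * (Af l0 + Af l)" if lLs: "l \<in> Ls" for l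
  proof -
    have lX: "l \<in> X" using lLs LsT TX by auto
    have "(\<Sum>r\<in>Rs. dq q d l0 l) \<le> (\<Sum>r\<in>Rs. H * (dq q d l0 r + dq q d l r))"
    proof (intro sum_mono)
      fix r assume "r \<in> Rs"
      hence rX: "r \<in> X" using TX by (auto simp: Rs_def)
      show "dq q d l0 l \<le> H * (dq q d l0 r + dq q d l r)"
        using Km[OF m l0X rX lX q] mfacts(4)[OF m rX lX] by (simp add: dq_def H_def)
    qed
    also have "\<dots> = H * (Af l0 + Af l)"
      by (simp add: Af_def sum.distrib distrib_left sum_distrib_left)
    finally show ?thesis using cRs by (simp add: mr_def)
  qed
  have "(\<Sum>l\<in>Ls. mr * dq q d l0 l) \<le> (\<Sum>l\<in>Ls. H * (Af l0 + Af l))"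
    using per by (intro sum_mono) auto
  also have "\<dots> = H * (mr * Af l0 + sum Af Ls)"
    using cLs by (simp add: sum.distrib distrib_left sum_distrib_left mr_def)
  also have "\<dots> \<le> H * (mr * (mr * Dl) + mr^2 * Dl)"
    using H1 Al0 cost mr1 by (intro mult_left_mono) auto
  also have "\<dots> = mr * (2 * H * mr * Dl)" by (simp add: power2_eq_square algebra_simps)
  finally have "mr * (\<Sum>l\<in>Ls. dq q d l0 l) \<le> mr * (2 * H * mr * Dl)"
    by (simp add: sum_distrib_left)
  hence sLs: "(\<Sum>l\<in>Ls. dq q d l0 l) \<le> 2 * H * mr * Dl" using mr1 by simp
  define f0 where "f0 = (\<Sum>u\<in>T. dq q d l0 u)"
  have "f0 = (\<Sum>l\<in>Ls. dq q d l0 l) + Af l0"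
    unfolding f0_def Af_def Rs_def using fT LsT by (metis add.commute sum.subset_diff)
  hence f0le: "f0 \<le> 2 * H * mr * Dl + mr * Dl" using sLs Al0 by linarith
  show ?thesis unfolding Dl_def[symmetric]
  proof (intro bexI[OF _ l0T] subsetI)
    fix x assume x: "x \<in> X - Ball_X X d l0 (6 * Dl powr (1/q))"
    show "x \<in> T"
    proof (rule ccontr)
      assume xT: "x \<notin> T"
      have xX: "x \<in> X" and far: "d l0 x > 6 * Dl powr (1/q)" using x by (auto simp: Ball_X_def)
      have "d l0 x powr q > 6 powr q * Dl" using thresh[OF _ Dl0 q far] by simp
      define Dq where "Dq = d l0 x powr q"
      have farq: "Dq > 2 * H * 3 powr q * Dl" using \<open>d l0 x powr q > _\<close> H6 by (simp add: Dq_def)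
      have gain: "(\<Sum>u\<in>S. dq q d l0 u) < (\<Sum>u\<in>S. dq q d x u)" if S: "S \<subseteq> T" "card S = mm" for S
      proof (rule ccontr)
        assume ng: "\<not> ?thesis"
        have "(\<Sum>u\<in>S. Dq) \<le> (\<Sum>u\<in>S. H * (dq q d l0 u + dq q d x u))"
        proof (intro sum_mono)
          fix u assume "u \<in> S"
          hence uX: "u \<in> X" using S TX by auto
          show "Dq \<le> H * (dq q d l0 u + dq q d x u)"
            using Km[OF m l0X uX xX q] mfacts(4)[OF m uX xX] by (simp add: Dq_def H_def)
        qed
        also have "\<dots> = H * ((\<Sum>u\<in>S. dq q d l0 u) + (\<Sum>u\<in>S. dq q d x u))"
          by (simp add: sum.distrib distrib_left sum_distrib_left)
        finally have B: "mr * Dq \<le> H * ((\<Sum>u\<in>S. dq q d l0 u) + (\<Sum>u\<in>S. dq q d x u))"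
          using S by (simp add: mr_def)
        have "(\<Sum>u\<in>S. dq q d l0 u) \<le> f0" unfolding f0_def
          using S fT by (intro sum_mono2) (auto simp: dq_nonneg)
        hence "(\<Sum>u\<in>S. dq q d l0 u) + (\<Sum>u\<in>S. dq q d x u) \<le> 2 * (2 * H * mr * Dl + mr * Dl)"
        proof -
          have "(\<Sum>u\<in>S. dq q d l0 u) + (\<Sum>u\<in>S. dq q d x u) \<le> 2 * f0"
            using ng \<open>(\<Sum>u\<in>S. dq q d l0 u) \<le> f0\<close> by linarith
          moreover have "2 * f0 \<le> 2 * (2 * H * mr * Dl + mr * Dl)"
            using f0le by (rule mult_left_mono) simp
          ultimately show ?thesis by (rule order_trans)
        qed
        hence "H * ((\<Sum>u\<in>S. dq q d l0 u) + (\<Sum>u\<in>S. dq q d x u)) \<le> H * (2 * (2 * H * mr * Dl + mr * Dl))"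
          using H1 by (intro mult_left_mono) auto
        with B have C: "mr * Dq \<le> mr * (2 * H * (1 + 2 * H) * Dl)"
          by (simp add: algebra_simps)
        have HDl: "0 \<le> 2 * H * Dl" using H1 Dl0 by simp
        have "2 * H * (1 + 2 * H) * Dl = (1 + 2 * H) * (2 * H * Dl)" by (simp add: algebra_simps)
        also have "\<dots> \<le> 3 powr q * (2 * H * Dl)" using H3 HDl by (intro mult_right_mono) auto
        also have "\<dots> = 2 * H * 3 powr q * Dl" by (simp add: algebra_simps)
        also have "\<dots> < Dq" using farq .
        finally have "mr * (2 * H * (1 + 2 * H) * Dl) < mr * Dq" using mr1 by simp
        with C show False by simp
      qed
      define T' where "T' = insert x (T - {l0})"
      have fT': "finite T'" and cT': "card T' = k" and T'X: "T' \<subseteq> X" and l0T': "l0 \<notin> T'"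
        using fT cT xT k xX TX l0T by (auto simp: T'_def card_insert_if)
      have le: "bp q d T' \<le> bp q d T" using opt fT' cT' T'X unfolding is_opt_def by blast
      have gt: "mr^2 * Dl < c T' L'" if L': "L' \<in> BB T'" for L'
      proof -
        have L'T': "L' \<subseteq> T'" and cL': "card L' = mm" using L' cT' kmm by (auto simp: BB_def)
        have fL': "finite L'" using L'T' fT' finite_subset by auto
        have "c T L \<ge> mr^2 * Dl" if "L \<in> BB T" for L
        proof -
          have "Min (c T ` BB T) \<le> c T L" using that finBB[OF fT] by simp
          thus ?thesis using Ls(2) bp_eq[of T] cost by (simp add: c_def Af_def Rs_def)
        qed
        note cge = this
        show ?thesis
        proof (cases "x \<in> L'")
          case True
          define L where "L = insert l0 (L' - {x})"
          define R where "R = T' - L'"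
          have l0L': "l0 \<notin> L' - {x}" using l0T' L'T' by auto
          have LT: "L \<subseteq> T" using L'T' l0T by (auto simp: L_def T'_def)
          have cL: "card L = mm" using l0L' fL' True cL' mm1 by (simp add: L_def card_insert_if)
          have "card L = card L'" using cL cL' by simp
          hence LB: "L \<in> BB T" using LT cT kmm cL by (simp add: BB_def)
          have TL: "T - L = R" using True xT l0T by (auto simp: L_def R_def T'_def)
          have RT: "R \<subseteq> T" and xR: "x \<notin> R" using True by (auto simp: R_def T'_def)
          have cR: "card R = mm" using cT' cL' L'T' fT' fL' kmm by (simp add: R_def card_Diff_subset)
          have fL'x: "finite (L' - {x})" using fL' by simp
          have L'eq: "L' = insert x (L' - {x})" using True by auto
          have "c T' L' = (\<Sum>r\<in>R. dq q d x r) + (\<Sum>l\<in>L' - {x}. \<Sum>r\<in>R. dq q d l r)"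
            unfolding c_def R_def[symmetric] using fL' True by (rule sum.remove)
          moreover have "c T L = (\<Sum>r\<in>R. dq q d l0 r) + (\<Sum>l\<in>L' - {x}. \<Sum>r\<in>R. dq q d l r)"
            unfolding c_def TL unfolding L_def using fL'x l0L' by simp
          moreover have "c T L \<ge> mr^2 * Dl" using cge[OF LB] .
          ultimately show ?thesis using gain[OF RT cR] by linarith
        next
          case False
          have L'T: "L' \<subseteq> T - {l0}" using L'T' False by (auto simp: T'_def)
          hence LB: "L' \<in> BB T" using cT kmm cL' by (auto simp: BB_def)
          define R0 where "R0 = T - {l0} - L'"
          have fR0: "finite R0" using fT by (simp add: R0_def)
          have e1: "T' - L' = insert x R0" using False xT by (auto simp: T'_def R0_def)
          have e2: "T - L' = insert l0 R0" using l0T L'T by (auto simp: R0_def)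
          have xR0: "x \<notin> R0" and l0R0: "l0 \<notin> R0" using xT by (auto simp: R0_def)
          have "c T' L' = (\<Sum>l\<in>L'. dq q d l x) + (\<Sum>l\<in>L'. \<Sum>r\<in>R0. dq q d l r)"
            unfolding c_def e1 using fR0 xR0 by (simp add: sum.distrib)
          also have "(\<Sum>l\<in>L'. dq q d l x) = (\<Sum>l\<in>L'. dq q d x l)"
            using L'T TX xX mfacts(4)[OF m] by (intro sum.cong refl) auto
          finally have A1: "c T' L' = (\<Sum>l\<in>L'. dq q d x l) + (\<Sum>l\<in>L'. \<Sum>r\<in>R0. dq q d l r)" .
          have "c T L' = (\<Sum>l\<in>L'. dq q d l l0) + (\<Sum>l\<in>L'. \<Sum>r\<in>R0. dq q d l r)"
            unfolding c_def e2 using fR0 l0R0 by (simp add: sum.distrib)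
          also have "(\<Sum>l\<in>L'. dq q d l l0) = (\<Sum>l\<in>L'. dq q d l0 l)"
            using L'T TX l0X mfacts(4)[OF m] by (intro sum.cong refl) auto
          finally have A2: "c T L' = (\<Sum>l\<in>L'. dq q d l0 l) + (\<Sum>l\<in>L'. \<Sum>r\<in>R0. dq q d l r)" .
          have "L' \<subseteq> T" using L'T by auto
          from gain[OF this cL'] A1 A2 cge[OF LB] show ?thesis by linarith
        qed
      qed
      have "mr^2 * Dl < bp q d T'" unfolding bp_eq[of T']
        using gt finBB[OF fT'] neBB[OF fT' cT'] by (subst Min_gr_iff) auto
      moreover have "bp q d T = mr^2 * Dl" using Ls(2) cost by (simp add: c_def Af_def Rs_def)
      ultimately show False using le by simp
    qed
  qed
qed

theorem theorem7:
  fixes q :: real and X :: "'a set" and d :: "'a \<Rightarrow> 'a \<Rightarrow> real" and k :: nat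
  assumes "q \<ge> 1" and "finite X" and "metric_on X d"
    and "2 \<le> k" and "k \<le> card X"
  shows "(\<forall>T. is_opt (cl q d) X k T \<longrightarrow>
            (\<exists>z0\<in>T. X - Ball_X X d z0 (2 * Delta_cl q d k T powr (1/q)) \<subseteq> T))
       \<and> (\<forall>T. is_opt (st q d) X k T \<longrightarrow>
            (\<exists>z0\<in>T. X - Ball_X X d z0 (4 * Delta_st q d k T powr (1/q)) \<subseteq> T))
       \<and> (even k \<longrightarrow> (\<forall>T. is_opt (bp q d) X k T \<longrightarrow>
            (\<exists>z0\<in>T. X - Ball_X X d z0 (6 * Delta_bp q d k T powr (1/q)) \<subseteq> T)))"
  using clique_part[OF assms(1-4)] star_part[OF assms(1-4)] bp_part[OF assms(1-4)]
  by blast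

end
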